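(* Let $\mathbb{F}$ be a field and $n,d\ge 1$. Let $X^1,\dots,X^d$ be pairwise disjoint sets of $n^2$ variables each, $X^i=\{x^i_{jk}: j,k\in[n]\}$, and let $A^i$ be the $n\times n$ matrix with $(j,k)$ entry $x^i_{jk}$. Let $f\in\mathbb{F}[X^1\cup\dots\cup X^d]$ be the $(1,1)$ entry of the product $A^1A^2\cdots A^d$. Then any homogeneous $\Sigma\Pi\Sigma$ circuit computing the product of these $d$ matrices (i.e., computing the output polynomial $f$) has size $\Omega(n^{d-1}/2^d)$.
   Context: An arithmetic circuit over $\mathbb{F}$ is a directed acyclic graph whose in-degree-0 gates are labelled by variables or field constants and whose internal gates are plus or product gates; its size is its number of gates. A $\Sigma\Pi\Sigma$ circuit is a levelled depth-3 circuit with a single plus gate at the top, product gates at the middle level and plus gates at the bottom level, so it computes $\sum_{i=1}^k\prod_{j=1}^{\deg(P_i)} l_{i,j}$ with affine forms $l_{i,j}$; $k$ is the top fan-in. It is homogeneous if every bottom plus gate computes a homogeneous linear form. The paper studies the product of matrices through the single output polynomial given by the $(1,1)$ entry. *)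

theory Defs
  imports Complex_Main "HOL-Library.Poly_Mapping"
begin

(* Variables are triples (i,j,k) standing for x^{i+1}_{j+1,k+1} (0-indexed). *)
type_synonym 'a mpoly = "((nat \<times> nat \<times> nat) \<Rightarrow>\<^sub>0 nat) \<Rightarrow>\<^sub>0 'a"

definition mvar :: "nat \<Rightarrow> nat \<Rightarrow> nat \<Rightarrow> 'a::comm_ring_1 mpoly" where
  "mvar i j k = Poly_Mapping.single (Poly_Mapping.single (i, j, k) 1) 1"

(* (j,k) entry of A^1 A^2 ... A^t, with A^{i+1} = (mvar i j k)_{j,k<n};
   t = 0 gives the identity matrix *)
fun matprod :: "nat \<Rightarrow> nat \<Rightarrow> nat \<Rightarrow> nat \<Rightarrow> 'a::comm_ring_1 mpoly" where
  "matprod n 0 j k = (if j = k then 1 else 0)"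
| "matprod n (Suc t) j k = (\<Sum>l<n. matprod n t j l * mvar t l k)"

definition mdeg :: "((nat \<times> nat \<times> nat) \<Rightarrow>\<^sub>0 nat) \<Rightarrow> nat" where
  "mdeg m = (\<Sum>v\<in>Poly_Mapping.keys m. Poly_Mapping.lookup m v)"

definition hom_linear :: "'a::comm_ring_1 mpoly \<Rightarrow> bool" where
  "hom_linear l \<longleftrightarrow> (\<forall>m\<in>Poly_Mapping.keys l. mdeg m = 1)"

(* A homogeneous Sigma-Pi-Sigma circuit: a list of product gates, each given by
   the list of (homogeneous linear) forms computed by its bottom plus gates. *)
definition hom_SPS :: "'a::comm_ring_1 mpoly list list \<Rightarrow> bool" where
  "hom_SPS C \<longleftrightarrow> (\<forall>P\<in>set C. \<forall>l\<in>set P. hom_linear l)"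

definition SPS_eval :: "'a::comm_ring_1 mpoly list list \<Rightarrow> 'a mpoly" where
  "SPS_eval C = (\<Sum>P\<leftarrow>C. prod_list P)"

definition SPS_forms :: "'a::comm_ring_1 mpoly list list \<Rightarrow> 'a mpoly set" where
  "SPS_forms C = (\<Union>P\<in>set C. set P)"

definition SPS_vars :: "'a::comm_ring_1 mpoly list list \<Rightarrow> (nat \<times> nat \<times> nat) set" where
  "SPS_vars C = (\<Union>l\<in>SPS_forms C. \<Union>m\<in>Poly_Mapping.keys l. Poly_Mapping.keys m)"

(* number of gates: top plus gate + product gates + (shared) bottom plus gates
   + (shared) variable input gates *)
definition SPS_size :: "'a::comm_ring_1 mpoly list list \<Rightarrow> nat" where
  "SPS_size C = 1 + length C + card (SPS_forms C) + card (SPS_vars C)"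

end

theory Submission
  imports Defs
begin


lift_definition dv :: "(nat\<times>nat\<times>nat) \<Rightarrow> 'a::comm_ring_1 mpoly \<Rightarrow> 'a mpoly" is
  "\<lambda>v p m. of_nat (Poly_Mapping.lookup m v + 1) * p (m + Poly_Mapping.single v 1)"
proof -
  fix v :: "nat\<times>nat\<times>nat" and p :: "((nat\<times>nat\<times>nat) \<Rightarrow>\<^sub>0 nat) \<Rightarrow> 'a"
  assume fin: "finite {m. p m \<noteq> 0}"
  have "{m. of_nat (Poly_Mapping.lookup m v + 1) * p (m + Poly_Mapping.single v 1) \<noteq> (0::'a)}
        \<subseteq> (\<lambda>m. m - Poly_Mapping.single v 1) ` {m. p m \<noteq> 0}"
  proof
    fix m assume "m \<in> {m. of_nat (Poly_Mapping.lookup m v + 1) * p (m + Poly_Mapping.single v 1) \<noteq> (0::'a)}"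
    then have "p (m + Poly_Mapping.single v 1) \<noteq> 0" by auto
    moreover have "m = (m + Poly_Mapping.single v 1) - Poly_Mapping.single v 1" by simp
    ultimately show "m \<in> (\<lambda>m. m - Poly_Mapping.single v 1) ` {m. p m \<noteq> 0}" by blast
  qed
  then show "finite {m. of_nat (Poly_Mapping.lookup m v + 1) * p (m + Poly_Mapping.single v 1) \<noteq> (0::'a)}"
    using fin by (meson finite_imageI finite_subset)
qed

lemma lookup_dv: "Poly_Mapping.lookup (dv v p) m = of_nat (Poly_Mapping.lookup m v + 1) * Poly_Mapping.lookup p (m + Poly_Mapping.single v 1)"
  by (simp add: dv.rep_eq)

lemma dv_add: "dv v (p + q) = dv v p + dv v q"
  by (rule poly_mapping_eqI) (simp add: lookup_dv lookup_add distrib_left)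

lemma dv_zero[simp]: "dv v 0 = 0"
  by (rule poly_mapping_eqI) (simp add: lookup_dv)

lemma dv_sum: "dv v (sum f A) = (\<Sum>a\<in>A. dv v (f a))"
  by (induction A rule: infinite_finite_induct) (auto simp: dv_add)

lemma dv_single: "dv v (Poly_Mapping.single m c) =
   (if Poly_Mapping.lookup m v = 0 then 0 else Poly_Mapping.single (m - Poly_Mapping.single v 1) (of_nat (Poly_Mapping.lookup m v) * c))"
proof (rule poly_mapping_eqI)
  fix m'
  show "Poly_Mapping.lookup (dv v (Poly_Mapping.single m c)) m' = Poly_Mapping.lookup (if Poly_Mapping.lookup m v = 0 then 0 else Poly_Mapping.single (m - Poly_Mapping.single v 1) (of_nat (Poly_Mapping.lookup m v) * c)) m'"
  proof (cases "Poly_Mapping.lookup m v = 0")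
    case True
    have "m \<noteq> m' + Poly_Mapping.single v 1"
    proof
      assume "m = m' + Poly_Mapping.single v 1"
      then have "Poly_Mapping.lookup m v = Poly_Mapping.lookup m' v + 1" by (simp add: lookup_add)
      with True show False by simp
    qed
    then show ?thesis using True by (simp add: lookup_dv lookup_single)
  next
    case False
    have eq: "(m = m' + Poly_Mapping.single v 1) \<longleftrightarrow> (m - Poly_Mapping.single v 1 = m')"
    proof
      assume "m = m' + Poly_Mapping.single v 1" then show "m - Poly_Mapping.single v 1 = m'" by simp
    next
      assume a: "m - Poly_Mapping.single v 1 = m'"
      show "m = m' + Poly_Mapping.single v 1"
      proof (rule poly_mapping_eqI)
        fix w show "Poly_Mapping.lookup m w = Poly_Mapping.lookup (m' + Poly_Mapping.single v 1) w"
          using False by (auto simp: a[symmetric] lookup_add lookup_minus lookup_single when_def)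
      qed
    qed
    show ?thesis
    proof (cases "m - Poly_Mapping.single v 1 = m'")
      case True
      then have "Poly_Mapping.lookup m' v + 1 = Poly_Mapping.lookup m v"
        using False by (auto simp: lookup_minus)
      then have "(of_nat (Poly_Mapping.lookup m' v + 1) :: 'a) = of_nat (Poly_Mapping.lookup m v)" by simp
      then show ?thesis using False eq True by (simp add: lookup_dv lookup_single when_def)
    next
      case c2: False
      then show ?thesis using False eq by (simp add: lookup_dv lookup_single when_def)
    qed
  qed
qed

lemma poly_expand: "p = (\<Sum>m\<in>Poly_Mapping.keys p. Poly_Mapping.single m (Poly_Mapping.lookup p m))"
proof (rule poly_mapping_eqI)
  fix k
  have "Poly_Mapping.lookup (\<Sum>m\<in>Poly_Mapping.keys p. Poly_Mapping.single m (Poly_Mapping.lookup p m)) k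
     = (\<Sum>m\<in>Poly_Mapping.keys p. (Poly_Mapping.lookup p m when m = k))"
    by (simp add: lookup_sum lookup_single)
  also have "\<dots> = Poly_Mapping.lookup p k"
    by (cases "k \<in> Poly_Mapping.keys p") (auto simp: when_def in_keys_iff)
  finally show "Poly_Mapping.lookup p k = Poly_Mapping.lookup (\<Sum>m\<in>Poly_Mapping.keys p. Poly_Mapping.single m (Poly_Mapping.lookup p m)) k" by simp
qed

lemma dv_mult_single: "dv v (Poly_Mapping.single a x * Poly_Mapping.single b y)
   = dv v (Poly_Mapping.single a x) * Poly_Mapping.single b y + Poly_Mapping.single a x * dv v (Poly_Mapping.single b y)"
proof -
  let ?e = "Poly_Mapping.single v (1::nat)"
  have la: "Poly_Mapping.lookup (a + b) v = Poly_Mapping.lookup a v + Poly_Mapping.lookup b v" by (simp add: lookup_add)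
  have s1: "Poly_Mapping.lookup a v \<noteq> 0 \<Longrightarrow> a - ?e + b = a + b - ?e"
    by (rule poly_mapping_eqI) (auto simp: lookup_add lookup_minus lookup_single when_def)
  have s2: "Poly_Mapping.lookup b v \<noteq> 0 \<Longrightarrow> a + (b - ?e) = a + b - ?e"
    by (rule poly_mapping_eqI) (auto simp: lookup_add lookup_minus lookup_single when_def)
  have s1': "Poly_Mapping.lookup a v \<noteq> 0 \<Longrightarrow> a - ?e + b = a + b - ?e" using s1 .
  show ?thesis
  proof (cases "Poly_Mapping.lookup a v = 0")
    case A: True
    show ?thesis
    proof (cases "Poly_Mapping.lookup b v = 0")
      case True with A show ?thesis by (simp add: mult_single dv_single la)
    next
      case False with A show ?thesis using s2[OF False, simplified] by (simp add: mult_single dv_single la algebra_simps)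
    qed
  next
    case A: False
    show ?thesis
    proof (cases "Poly_Mapping.lookup b v = 0")
      case True have "b + (a - ?e) = a + b - ?e" using s1[OF A] by (simp add: add.commute)
      with True A show ?thesis by (simp add: mult_single dv_single la algebra_simps)
    next
      case False
      have "dv v (Poly_Mapping.single a x * Poly_Mapping.single b y) = Poly_Mapping.single (a + b - ?e) (of_nat (Poly_Mapping.lookup a v) * x * y + x * (of_nat (Poly_Mapping.lookup b v) * y))"
        using A False by (simp add: mult_single dv_single la algebra_simps)
      also have "\<dots> = Poly_Mapping.single (a - ?e + b) (of_nat (Poly_Mapping.lookup a v) * x * y) + Poly_Mapping.single (a + (b - ?e)) (x * (of_nat (Poly_Mapping.lookup b v) * y))"
        by (simp only: single_add s1[OF A] s2[OF False])
      also have "\<dots> = dv v (Poly_Mapping.single a x) * Poly_Mapping.single b y + Poly_Mapping.single a x * dv v (Poly_Mapping.single b y)"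
        using A False by (simp add: mult_single dv_single)
      finally show ?thesis .
    qed
  qed
qed

lemma dv_mult: "dv v (p * q) = dv v p * q + p * dv v q"
proof -
  define P where "P = (\<Sum>a\<in>Poly_Mapping.keys p. Poly_Mapping.single a (Poly_Mapping.lookup p a))"
  define Q where "Q = (\<Sum>b\<in>Poly_Mapping.keys q. Poly_Mapping.single b (Poly_Mapping.lookup q b))"
  have pP: "p = P" unfolding P_def by (rule poly_expand)
  have qQ: "q = Q" unfolding Q_def by (rule poly_expand)
  have "dv v (P * Q) = dv v P * Q + P * dv v Q"
    unfolding P_def Q_def
    by (simp only: sum_product dv_sum dv_mult_single sum.distrib)
  then show ?thesis by (simp only: pP qQ)
qed



definition sc :: "'a::field \<Rightarrow> 'a mpoly \<Rightarrow> 'a mpoly" where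
  "sc c p = Poly_Mapping.single 0 c * p"

interpretation mp: vector_space "sc :: 'a::field \<Rightarrow> 'a mpoly \<Rightarrow> 'a mpoly"
  by unfold_locales (simp_all add: sc_def distrib_left single_add distrib_right mult_single mult.assoc[symmetric])

lemma dv_const[simp]: "dv v (Poly_Mapping.single 0 c) = 0"
  by (simp add: dv_single)

lemma dv_one[simp]: "dv v 1 = 0"
  using dv_const[of v 1] by simp

lemma dv_sc: "dv v (sc c p) = sc c (dv v p)"
  by (simp add: sc_def dv_mult)

lemma single_sum: "Poly_Mapping.single k (sum f A) = (\<Sum>a\<in>A. Poly_Mapping.single k (f a))"
  by (induction A rule: infinite_finite_induct) (auto simp: single_add)

lemma mdeg_one_single:
  assumes "mdeg m = 1" "Poly_Mapping.lookup m v \<noteq> 0"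
  shows "m = Poly_Mapping.single v 1"
proof -
  have vk: "v \<in> Poly_Mapping.keys m" using assms(2) by (simp add: in_keys_iff)
  have "mdeg m = Poly_Mapping.lookup m v + (\<Sum>w\<in>Poly_Mapping.keys m - {v}. Poly_Mapping.lookup m w)"
    unfolding mdeg_def using vk by (simp add: sum.remove)
  moreover have "Poly_Mapping.lookup m v \<ge> 1" using assms(2) by simp
  ultimately have 1: "Poly_Mapping.lookup m v = 1" and 2: "(\<Sum>w\<in>Poly_Mapping.keys m - {v}. Poly_Mapping.lookup m w) = 0"
    using assms(1) by linarith+
  from 2 have "\<forall>w\<in>Poly_Mapping.keys m - {v}. Poly_Mapping.lookup m w = 0" by simp
  then have k: "Poly_Mapping.keys m \<subseteq> {v}" by (auto simp: in_keys_iff)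
  show ?thesis
  proof (rule poly_mapping_eqI)
    fix w show "Poly_Mapping.lookup m w = Poly_Mapping.lookup (Poly_Mapping.single v 1) w"
      using 1 k by (cases "w = v") (auto simp: lookup_single in_keys_iff)
  qed
qed

lemma dv_hom_linear:
  assumes "hom_linear (l::'a::comm_ring_1 mpoly)"
  shows "\<exists>c. dv v l = Poly_Mapping.single 0 c"
proof -
  have each: "dv v (Poly_Mapping.single m (Poly_Mapping.lookup l m)) = Poly_Mapping.single 0 (if Poly_Mapping.lookup m v = 0 then 0 else of_nat (Poly_Mapping.lookup m v) * Poly_Mapping.lookup l m)"
    if "m \<in> Poly_Mapping.keys l" for m
  proof (cases "Poly_Mapping.lookup m v = 0")
    case True then show ?thesis by (simp add: dv_single)
  next
    case False
    have "mdeg m = 1" using assms that by (simp add: hom_linear_def)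
    then have "m = Poly_Mapping.single v 1" using False by (rule mdeg_one_single)
    then show ?thesis using False by (simp add: dv_single)
  qed
  have "dv v l = (\<Sum>m\<in>Poly_Mapping.keys l. dv v (Poly_Mapping.single m (Poly_Mapping.lookup l m)))"
    by (subst poly_expand) (simp add: dv_sum)
  also have "\<dots> = (\<Sum>m\<in>Poly_Mapping.keys l. Poly_Mapping.single 0 (if Poly_Mapping.lookup m v = 0 then 0 else of_nat (Poly_Mapping.lookup m v) * Poly_Mapping.lookup l m))"
    by (rule sum.cong) (simp_all add: each)
  also have "\<dots> = Poly_Mapping.single 0 (\<Sum>m\<in>Poly_Mapping.keys l. if Poly_Mapping.lookup m v = 0 then 0 else of_nat (Poly_Mapping.lookup m v) * Poly_Mapping.lookup l m)"
    by (simp add: single_sum)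
  finally show ?thesis by blast
qed

fun subprods :: "'a::comm_ring_1 mpoly list \<Rightarrow> 'a mpoly set" where
  "subprods [] = {1}"
| "subprods (l # P) = subprods P \<union> (\<lambda>q. l * q) ` subprods P"

lemma finite_subprods: "finite (subprods P)"
  by (induction P) auto

lemma card_subprods: "card (subprods P) \<le> 2 ^ length P"
proof (induction P)
  case Nil then show ?case by simp
next
  case (Cons l P)
  have "card (subprods (l # P)) \<le> card (subprods P) + card ((\<lambda>q. l * q) ` subprods P)"
    by (simp add: card_Un_le)
  also have "\<dots> \<le> card (subprods P) + card (subprods P)"
    using card_image_le[OF finite_subprods] by simp
  finally show ?case using Cons by simp
qed

lemma prod_in_subprods: "prod_list P \<in> subprods P"
  by (induction P) auto

lemma mult_span:
  fixes l :: "'a::field mpoly"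
  assumes "x \<in> mp.span S"
  shows "l * x \<in> mp.span ((\<lambda>q. l * q) ` S)"
  using assms
proof (induction rule: mp.span_induct_alt)
  case base then show ?case by (simp add: mp.span_zero)
next
  case (step c x y)
  have "l * (sc c x + y) = sc c (l * x) + l * y" by (simp add: sc_def algebra_simps)
  moreover have "l * x \<in> mp.span ((\<lambda>q. l * q) ` S)" using step by (intro mp.span_base) auto
  ultimately show ?case using step by (simp add: mp.span_add mp.span_scale)
qed

lemma dv_subprods:
  fixes P :: "'a::field mpoly list"
  assumes "\<forall>l\<in>set P. hom_linear l" "q \<in> subprods P"
  shows "dv v q \<in> mp.span (subprods P)"
  using assms
proof (induction P arbitrary: q)
  case Nil then show ?case by (simp add: mp.span_zero)
next
  case (Cons l P)
  have sub: "mp.span (subprods P) \<subseteq> mp.span (subprods (l # P))"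
    by (rule mp.span_mono) auto
  from Cons.prems(2) consider "q \<in> subprods P" | q' where "q' \<in> subprods P" "q = l * q'" by auto
  then show ?case
  proof cases
    case 1 then show ?thesis using Cons sub by auto
  next
    case 2
    obtain c where c: "dv v l = Poly_Mapping.single 0 c" using dv_hom_linear[of l v] Cons.prems(1) by auto
    have "dv v q = sc c q' + l * dv v q'" using 2 c by (simp add: dv_mult sc_def)
    moreover have "sc c q' \<in> mp.span (subprods (l # P))"
      using 2 by (intro mp.span_scale mp.span_base) auto
    moreover have "dv v q' \<in> mp.span (subprods P)" using Cons 2 by auto
    then have "l * dv v q' \<in> mp.span ((\<lambda>q. l * q) ` subprods P)" by (rule mult_span)
    then have "l * dv v q' \<in> mp.span (subprods (l # P))"
      using mp.span_mono[of "(\<lambda>q. l * q) ` subprods P" "subprods (l # P)"] by auto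
    ultimately show ?thesis by (simp add: mp.span_add)
  qed
qed

fun dvs :: "(nat\<times>nat\<times>nat) list \<Rightarrow> 'a::comm_ring_1 mpoly \<Rightarrow> 'a mpoly" where
  "dvs [] p = p"
| "dvs (v # vs) p = dv v (dvs vs p)"

lemma dv_span:
  fixes S :: "'a::field mpoly set"
  assumes cl: "\<And>x. x \<in> S \<Longrightarrow> dv v x \<in> mp.span S" and "x \<in> mp.span S"
  shows "dv v x \<in> mp.span S"
  using assms(2)
proof (induction rule: mp.span_induct_alt)
  case base then show ?case by (simp add: mp.span_zero)
next
  case (step c x y)
  then show ?case using cl by (simp add: dv_add dv_sc mp.span_add mp.span_scale)
qed

lemma dvs_span:
  fixes S :: "'a::field mpoly set"
  assumes cl: "\<And>v x. x \<in> S \<Longrightarrow> dv v x \<in> mp.span S" and "x \<in> mp.span S"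
  shows "dvs vs x \<in> mp.span S"
  by (induction vs) (auto intro: dv_span cl assms(2))



definition homog :: "nat \<Rightarrow> 'a::comm_ring_1 mpoly \<Rightarrow> bool" where
  "homog e p \<longleftrightarrow> (\<forall>m\<in>Poly_Mapping.keys p. mdeg m = e)"

lemma mdeg_sup: "finite S \<Longrightarrow> Poly_Mapping.keys m \<subseteq> S \<Longrightarrow> mdeg m = (\<Sum>v\<in>S. Poly_Mapping.lookup m v)"
  unfolding mdeg_def by (rule sum.mono_neutral_left) (auto simp: in_keys_iff)

lemma mdeg_add: "mdeg (a + b) = mdeg a + mdeg b"
proof -
  let ?S = "Poly_Mapping.keys a \<union> Poly_Mapping.keys b \<union> Poly_Mapping.keys (a + b)"
  have f: "finite ?S" by simp
  have 1: "mdeg a = (\<Sum>v\<in>?S. Poly_Mapping.lookup a v)" by (rule mdeg_sup[OF f]) auto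
  have 2: "mdeg b = (\<Sum>v\<in>?S. Poly_Mapping.lookup b v)" by (rule mdeg_sup[OF f]) auto
  have 3: "mdeg (a + b) = (\<Sum>v\<in>?S. Poly_Mapping.lookup (a + b) v)" by (rule mdeg_sup[OF f]) auto
  show ?thesis unfolding 1 2 3 by (simp add: lookup_add sum.distrib)
qed

lemma mdeg_zero[simp]: "mdeg 0 = 0"
  by (simp add: mdeg_def)

lemma mdeg_single1[simp]: "mdeg (Poly_Mapping.single v n) = n"
  by (simp add: mdeg_def)

lemma homog_mult: "homog e p \<Longrightarrow> homog f q \<Longrightarrow> homog (e + f) (p * q)"
  unfolding homog_def using keys_mult[of p q] by (force simp: mdeg_add)

lemma homog_add: "homog e p \<Longrightarrow> homog e q \<Longrightarrow> homog e (p + q)"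
  unfolding homog_def using keys_add[of p q] by blast

lemma keys_diff_sub: "Poly_Mapping.keys (p - q) \<subseteq> Poly_Mapping.keys p \<union> Poly_Mapping.keys (q::'a::comm_ring_1 mpoly)"
  by (auto simp: in_keys_iff lookup_minus)

lemma homog_diff: "homog e p \<Longrightarrow> homog e q \<Longrightarrow> homog e (p - (q::'a::comm_ring_1 mpoly))"
  unfolding homog_def using keys_diff_sub[of p q] by blast

lemma homog_zero[simp]: "homog e 0"
  by (simp add: homog_def)

lemma homog_one[simp]: "homog 0 1"
  by (simp add: homog_def)

lemma homog_sum: "(\<And>a. a \<in> A \<Longrightarrow> homog e (f a)) \<Longrightarrow> homog e (sum f A)"
  by (induction A rule: infinite_finite_induct) (auto intro: homog_add)

lemma homog_prod_list: "\<forall>l\<in>set P. hom_linear l \<Longrightarrow> homog (length P) (prod_list P)"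
proof (induction P)
  case Nil then show ?case by simp
next
  case (Cons l P)
  have "homog 1 l" using Cons.prems by (simp add: homog_def hom_linear_def)
  then show ?case using Cons homog_mult[of 1 l "length P" "prod_list P"] by simp
qed

lemma homog_mvar: "homog 1 (mvar i j k)"
  by (simp add: homog_def mvar_def)

lemma homog_matprod: "homog t (matprod n t j k)"
proof (induction t arbitrary: k)
  case 0 then show ?case by simp
next
  case (Suc t)
  show ?case
    by (simp, rule homog_sum) (metis Suc.IH homog_mult homog_mvar Suc_eq_plus1)
qed

lemma sum_list_filter_split:
  "sum_list (map f xs) = sum_list (map f (filter P xs)) + sum_list (map f (filter (\<lambda>x. \<not> P x) xs))"
  for f :: "_ \<Rightarrow> 'b::comm_monoid_add"
  by (induction xs) (auto simp: algebra_simps)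

lemma homog_sum_list:
  "\<forall>P\<in>set xs. homog e (f P) \<Longrightarrow> homog e (sum_list (map f xs))"
  by (induction xs) (auto intro: homog_add)

lemma keys_other_degree:
  assumes "\<forall>P\<in>set xs. \<forall>l\<in>set P. hom_linear (l::'a::comm_ring_1 mpoly)" "\<forall>P\<in>set xs. length P \<noteq> d"
  shows "\<forall>m\<in>Poly_Mapping.keys (sum_list (map prod_list xs)). mdeg m \<noteq> d"
  using assms
proof (induction xs)
  case Nil then show ?case by simp
next
  case (Cons P xs)
  have "homog (length P) (prod_list P)" using Cons.prems by (intro homog_prod_list) auto
  then have "\<forall>m\<in>Poly_Mapping.keys (prod_list P). mdeg m \<noteq> d" using Cons.prems by (auto simp: homog_def)
  then show ?case using Cons keys_add[of "prod_list P" "sum_list (map prod_list xs)"] by auto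
qed

lemma eval_split:
  fixes C :: "'a::comm_ring_1 mpoly list list"
  assumes "hom_SPS C" "SPS_eval C = matprod n d j k"
  shows "matprod n d j k = sum_list (map prod_list (filter (\<lambda>P. length P = d) C))"
proof -
  let ?q1 = "sum_list (map prod_list (filter (\<lambda>P. length P = d) C))"
  let ?q2 = "sum_list (map prod_list (filter (\<lambda>P. \<not> length P = d) C))"
  have split: "matprod n d j k = ?q1 + ?q2"
    using assms(2) unfolding SPS_eval_def by (metis sum_list_filter_split)
  have h1: "homog d ?q1"
    using assms(1) unfolding hom_SPS_def
    by (intro homog_sum_list) (auto intro!: homog_prod_list[where P = _, simplified] dest: homog_prod_list)
  have "homog d ?q2"
  proof -
    have "?q2 = matprod n d j k - ?q1" using split by simp
    then show ?thesis using homog_diff[OF homog_matprod h1] by simp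
  qed
  moreover have "\<forall>m\<in>Poly_Mapping.keys ?q2. mdeg m \<noteq> d"
    using assms(1) unfolding hom_SPS_def by (intro keys_other_degree) auto
  ultimately have "Poly_Mapping.keys ?q2 = {}" unfolding homog_def by blast
  then have "?q2 = 0" by (metis poly_mapping_eqI lookup_zero not_in_keys_iff_lookup_eq_zero empty_iff)
  then show ?thesis using split by simp
qed



definition G :: "nat \<Rightarrow> nat \<Rightarrow> nat \<Rightarrow> nat \<Rightarrow> (nat \<Rightarrow> nat) set" where
  "G n t j k = {g. g 0 = j \<and> g t = k \<and> (\<forall>i<t. g i < n) \<and> (\<forall>i>t. g i = 0)}"

definition pmono :: "nat \<Rightarrow> (nat \<Rightarrow> nat) \<Rightarrow> (nat\<times>nat\<times>nat) \<Rightarrow>\<^sub>0 nat" where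
  "pmono t g = (\<Sum>i<t. Poly_Mapping.single (i, g i, g (Suc i)) 1)"

lemma finite_G: "finite (G n t j k)"
proof -
  have "G n t j k \<subseteq> {g. \<forall>x. (x \<in> {..t} \<longrightarrow> g x \<in> {..n+j+k}) \<and> (x \<notin> {..t} \<longrightarrow> g x = 0)}"
  proof
    fix g assume g: "g \<in> G n t j k"
    have "g x \<le> n + j + k" if "x \<le> t" for x
    proof (cases "x = t")
      case True then show ?thesis using g by (simp add: G_def)
    next
      case False then have "x < t" using that by simp
      then show ?thesis using g by (fastforce simp: G_def)
    qed
    then show "g \<in> {g. \<forall>x. (x \<in> {..t} \<longrightarrow> g x \<in> {..n+j+k}) \<and> (x \<notin> {..t} \<longrightarrow> g x = 0)}"
      using g by (auto simp: G_def)
  qed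
  moreover have "finite {g. \<forall>x. (x \<in> {..t} \<longrightarrow> g x \<in> {..n+j+k}) \<and> (x \<notin> {..t} \<longrightarrow> (g::nat\<Rightarrow>nat) x = 0)}"
    by (rule finite_set_of_finite_funs) auto
  ultimately show ?thesis by (rule finite_subset)
qed

lemma G_slice: "l < n \<Longrightarrow> {g. g \<in> G n (Suc t) j k \<and> g t = l} = (\<lambda>g. g(Suc t := k)) ` G n t j l"
proof (intro equalityI subsetI)
  fix g' assume a: "l < n" "g' \<in> {g. g \<in> G n (Suc t) j k \<and> g t = l}"
  let ?g = "g'(Suc t := 0)"
  have "?g \<in> G n t j l" using a by (auto simp: G_def)
  moreover have "g' = ?g(Suc t := k)" using a by (auto simp: G_def)
  ultimately show "g' \<in> (\<lambda>g. g(Suc t := k)) ` G n t j l" by blast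
next
  fix g' assume a: "l < n" "g' \<in> (\<lambda>g. g(Suc t := k)) ` G n t j l"
  then obtain g where g: "g \<in> G n t j l" "g' = g(Suc t := k)" by auto
  have "\<forall>i<Suc t. g' i < n"
  proof (intro allI impI)
    fix i assume "i < Suc t"
    then consider "i < t" | "i = t" by linarith
    then show "g' i < n" using g a by cases (auto simp: G_def)
  qed
  then show "g' \<in> {g. g \<in> G n (Suc t) j k \<and> g t = l}" using g a by (auto simp: G_def)
qed

lemma G_inj: "inj_on (\<lambda>g. g(Suc t := k)) (G n t j l)"
proof (rule inj_onI)
  fix g1 g2 assume "g1 \<in> G n t j l" "g2 \<in> G n t j l" "g1(Suc t := k) = g2(Suc t := k)"
  then show "g1 = g2" by (auto simp: G_def fun_eq_iff) (metis fun_upd_other lessI)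
qed

lemma G_split:
  "(\<Sum>g\<in>G n (Suc t) j k. f g) = (\<Sum>l<n. \<Sum>g\<in>G n t j l. f (g(Suc t := k)))"
proof -
  have img: "(\<lambda>g. g t) ` G n (Suc t) j k \<subseteq> {..<n}" by (auto simp: G_def)
  have "(\<Sum>g\<in>G n (Suc t) j k. f g) = (\<Sum>l<n. \<Sum>g\<in>{g. g \<in> G n (Suc t) j k \<and> g t = l}. f g)"
    by (rule sum.group[OF finite_G _ img, symmetric]) simp
  also have "\<dots> = (\<Sum>l<n. \<Sum>g\<in>G n t j l. f (g(Suc t := k)))"
  proof (rule sum.cong[OF refl])
    fix l assume "l \<in> {..<n}"
    then show "(\<Sum>g\<in>{g. g \<in> G n (Suc t) j k \<and> g t = l}. f g) = (\<Sum>g\<in>G n t j l. f (g(Suc t := k)))"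
      by (simp add: G_slice sum.reindex[OF G_inj])
  qed
  finally show ?thesis .
qed

lemma G_zero: "G n 0 j k = (if j = k then {\<lambda>i. if i = 0 then j else 0} else {})"
  by (auto simp: G_def fun_eq_iff)

lemma mono_upd: "g \<in> G n t j l \<Longrightarrow> pmono (Suc t) (g(Suc t := k)) = pmono t g + Poly_Mapping.single (t, l, k) 1"
  unfolding pmono_def by (simp add: G_def)

lemma matprod_expand: "(matprod n t j k :: 'a::comm_ring_1 mpoly) = (\<Sum>g\<in>G n t j k. Poly_Mapping.single (pmono t g) 1)"
proof (induction t arbitrary: k)
  case 0 then show ?case by (simp add: G_zero pmono_def)
next
  case (Suc t)
  have "(matprod n (Suc t) j k :: 'a mpoly) = (\<Sum>l<n. matprod n t j l * mvar t l k)" by simp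
  also have "\<dots> = (\<Sum>l<n. (\<Sum>g\<in>G n t j l. Poly_Mapping.single (pmono t g) 1) * mvar t l k)"
    by (intro sum.cong refl) (rule arg_cong[where f="\<lambda>x. x * _"], rule Suc.IH)
  also have "\<dots> = (\<Sum>l<n. \<Sum>g\<in>G n t j l. Poly_Mapping.single (pmono t g + Poly_Mapping.single (t, l, k) 1) 1)"
    by (simp add: sum_distrib_right mvar_def mult_single)
  also have "\<dots> = (\<Sum>l<n. \<Sum>g\<in>G n t j l. Poly_Mapping.single (pmono (Suc t) (g(Suc t := k))) 1)"
    by (intro sum.cong refl) (simp add: mono_upd)
  also have "\<dots> = (\<Sum>g\<in>G n (Suc t) j k. Poly_Mapping.single (pmono (Suc t) g) 1)"
    by (simp add: G_split)
  finally show ?case .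
qed

lemma card_G: "j < n \<Longrightarrow> card (G n (Suc t) j k) = n ^ t"
proof (induction t arbitrary: k)
  case 0
  have "card (G n (Suc 0) j k) = (\<Sum>l<n. card (G n 0 j l))"
    using G_split[where f="\<lambda>_. 1::nat" and t=0 and n=n and j=j and k=k] by simp
  also have "\<dots> = (\<Sum>l<n. if l = j then 1 else 0)"
    by (intro sum.cong refl) (auto simp: G_zero)
  finally show ?case using 0 by simp
next
  case (Suc t)
  have "card (G n (Suc (Suc t)) j k) = (\<Sum>l<n. card (G n (Suc t) j l))"
    using G_split[where f="\<lambda>_. 1::nat" and t="Suc t" and n=n and j=j and k=k] by simp
  then show ?case using Suc by simp
qed



definition psum :: "nat set \<Rightarrow> (nat \<Rightarrow> nat) \<Rightarrow> (nat\<times>nat\<times>nat) \<Rightarrow>\<^sub>0 nat" where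
  "psum A g = (\<Sum>i\<in>A. Poly_Mapping.single (i, g i, g (Suc i)) 1)"

lemma lookup_psum:
  assumes "finite A"
  shows "Poly_Mapping.lookup (psum A g) (a, b, c) = (if a \<in> A \<and> g a = b \<and> g (Suc a) = c then 1 else 0)"
proof -
  have "Poly_Mapping.lookup (psum A g) (a, b, c) = (\<Sum>i\<in>A. if i = a then (if g a = b \<and> g (Suc a) = c then 1 else 0) else 0)"
    unfolding psum_def lookup_sum by (intro sum.cong refl) (auto simp: lookup_single when_def)
  also have "\<dots> = (if a \<in> A \<and> g a = b \<and> g (Suc a) = c then 1 else 0)"
    using assms by (simp add: sum.delta')
  finally show ?thesis .
qed

lemma pmono_psum: "pmono t g = psum {..<t} g"
  by (simp add: pmono_def psum_def)

definition Od :: "nat \<Rightarrow> nat set" where "Od d = {i. i < d \<and> odd i}"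
definition Ev :: "nat \<Rightarrow> nat set" where "Ev d = {i. i < d \<and> even i}"

lemma fin_Od[simp]: "finite (Od d)" by (simp add: Od_def)
lemma fin_Ev[simp]: "finite (Ev d)" by (simp add: Ev_def)

lemma pmono_split: "pmono d g = psum (Ev d) g + psum (Od d) g"
proof -
  have "{..<d} = Ev d \<union> Od d" "Ev d \<inter> Od d = {}" by (auto simp: Ev_def Od_def)
  then show ?thesis unfolding pmono_psum psum_def by (simp add: sum.union_disjoint)
qed

definition ev :: "(nat\<times>nat\<times>nat) list \<Rightarrow> (nat\<times>nat\<times>nat) \<Rightarrow>\<^sub>0 nat" where
  "ev vs = sum_list (map (\<lambda>v. Poly_Mapping.single v 1) vs)"

lemma ev_Cons: "ev (v # vs) = Poly_Mapping.single v 1 + ev vs"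
  by (simp add: ev_def)

lemma lookup_ev_notin: "v \<notin> set vs \<Longrightarrow> Poly_Mapping.lookup (ev vs) v = 0"
  by (induction vs) (auto simp: ev_def lookup_add lookup_single)

lemma dvs_sum: "dvs vs (sum f A) = (\<Sum>a\<in>A. dvs vs (f a))"
  by (induction vs) (auto simp: dv_sum)

lemma dvs_zero[simp]: "dvs vs 0 = 0"
  by (induction vs) auto

lemma dvs_mono:
  assumes "distinct vs" "\<forall>v\<in>set vs. Poly_Mapping.lookup m v \<le> 1"
  shows "dvs vs (Poly_Mapping.single m (1::'a::comm_ring_1)) =
    (if \<forall>v\<in>set vs. Poly_Mapping.lookup m v = 1 then Poly_Mapping.single (m - ev vs) 1 else 0)"
  using assms
proof (induction vs)
  case Nil then show ?case by (simp add: ev_def)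
next
  case (Cons v vs)
  show ?case
  proof (cases "\<forall>w\<in>set vs. Poly_Mapping.lookup m w = 1")
    case True
    then have IH: "dvs vs (Poly_Mapping.single m (1::'a)) = Poly_Mapping.single (m - ev vs) 1" using Cons by simp
    have lv: "Poly_Mapping.lookup (m - ev vs) v = Poly_Mapping.lookup m v"
      using Cons.prems lookup_ev_notin[of v vs] by (simp add: lookup_minus)
    show ?thesis
    proof (cases "Poly_Mapping.lookup m v = 1")
      case True
      have "m - ev vs - Poly_Mapping.single v 1 = m - ev (v # vs)"
        by (simp add: ev_Cons diff_diff_add add.commute)
      then show ?thesis using True \<open>\<forall>w\<in>set vs. _\<close> IH lv by (simp add: dv_single)
    next
      case False
      then have "Poly_Mapping.lookup m v = 0" using Cons.prems by auto
      then show ?thesis using IH lv False by (simp add: dv_single)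
    qed
  next
    case False
    have eq: "dvs vs (Poly_Mapping.single m (1::'a)) = (if \<forall>w\<in>set vs. Poly_Mapping.lookup m w = 1 then Poly_Mapping.single (m - ev vs) 1 else 0)"
      using Cons.IH Cons.prems by simp
    have "dvs vs (Poly_Mapping.single m (1::'a)) = 0" using eq[unfolded if_not_P[OF False]] .
    then show ?thesis using False by auto
  qed
qed

lemma G_eq:
  assumes "g1 \<in> G n d 0 0" "g2 \<in> G n d 0 0" "\<And>x. 0 < x \<Longrightarrow> x < d \<Longrightarrow> g1 x = g2 x"
  shows "g1 = g2"
proof
  fix x
  consider "x = 0" | "0 < x" "x < d" | "x = d" | "x > d" by linarith
  then show "g1 x = g2 x" using assms by cases (auto simp: G_def)
qed

lemma G_eq_odd:
  assumes "g1 \<in> G n d 0 0" "g2 \<in> G n d 0 0"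
    "\<And>i. i \<in> Od d \<Longrightarrow> g1 i = g2 i \<and> g1 (Suc i) = g2 (Suc i)"
  shows "g1 = g2"
proof (rule G_eq[OF assms(1,2)])
  fix x assume x: "0 < x" "x < d"
  show "g1 x = g2 x"
  proof (cases "odd x")
    case True then show ?thesis using assms(3)[of x] x by (auto simp: Od_def)
  next
    case False
    then have "x - 1 \<in> Od d" "Suc (x - 1) = x" using x by (auto simp: Od_def)
    then show ?thesis using assms(3)[of "x - 1"] by auto
  qed
qed

lemma G_eq_even:
  assumes "g1 \<in> G n d 0 0" "g2 \<in> G n d 0 0"
    "\<And>i. i \<in> Ev d \<Longrightarrow> g1 i = g2 i \<and> g1 (Suc i) = g2 (Suc i)"
  shows "g1 = g2"
proof (rule G_eq[OF assms(1,2)])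
  fix x assume x: "0 < x" "x < d"
  show "g1 x = g2 x"
  proof (cases "even x")
    case True then show ?thesis using assms(3)[of x] x by (auto simp: Ev_def)
  next
    case False
    then have "x - 1 \<in> Ev d" "Suc (x - 1) = x" using x by (auto simp: Ev_def)
    then show ?thesis using assms(3)[of "x - 1"] by auto
  qed
qed

lemma psum_Ev_inj: "inj_on (psum (Ev d)) (G n d 0 0)"
proof (rule inj_onI)
  fix g1 g2 assume g: "g1 \<in> G n d 0 0" "g2 \<in> G n d 0 0" and eq: "psum (Ev d) g1 = psum (Ev d) g2"
  show "g1 = g2"
  proof (rule G_eq_even[OF g])
    fix i assume i: "i \<in> Ev d"
    have "Poly_Mapping.lookup (psum (Ev d) g2) (i, g1 i, g1 (Suc i)) = 1"
      using i by (simp add: eq[symmetric] lookup_psum)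
    then show "g1 i = g2 i \<and> g1 (Suc i) = g2 (Suc i)"
      by (simp add: lookup_psum split: if_splits)
  qed
qed

definition vsg :: "nat \<Rightarrow> (nat \<Rightarrow> nat) \<Rightarrow> (nat\<times>nat\<times>nat) list" where
  "vsg d g = map (\<lambda>i. (i, g i, g (Suc i))) (filter odd [0..<d])"

lemma set_vsg: "set (vsg d g) = (\<lambda>i. (i, g i, g (Suc i))) ` Od d"
  by (auto simp: vsg_def Od_def)

lemma distinct_vsg: "distinct (vsg d g)"
  unfolding vsg_def by (simp add: distinct_map inj_on_def)

lemma ev_vsg: "ev (vsg d g) = psum (Od d) g"
proof -
  have "ev (vsg d g) = sum_list (map (\<lambda>i. Poly_Mapping.single (i, g i, g (Suc i)) 1) (filter odd [0..<d]))"
    by (simp add: ev_def vsg_def o_def)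
  also have "\<dots> = (\<Sum>i\<in>set (filter odd [0..<d]). Poly_Mapping.single (i, g i, g (Suc i)) 1)"
    by (rule sum_list_distinct_conv_sum_set) simp
  also have "set (filter odd [0..<d]) = Od d" by (auto simp: Od_def)
  finally show ?thesis by (simp add: psum_def)
qed

lemma deriv_F:
  assumes g0: "g0 \<in> G n d 0 0"
  shows "dvs (vsg d g0) (matprod n d 0 0 :: 'a::comm_ring_1 mpoly) = Poly_Mapping.single (psum (Ev d) g0) 1"
proof -
  let ?vs = "vsg d g0"
  have le1: "\<forall>v\<in>set ?vs. Poly_Mapping.lookup (pmono d g) v \<le> 1" for g
    by (auto simp: pmono_psum lookup_psum set_vsg)
  have cond: "(\<forall>v\<in>set ?vs. Poly_Mapping.lookup (pmono d g) v = 1) \<longleftrightarrow> g = g0" if g: "g \<in> G n d 0 0" for g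
  proof
    assume a: "\<forall>v\<in>set ?vs. Poly_Mapping.lookup (pmono d g) v = 1"
    show "g = g0"
    proof (rule G_eq_odd[OF g g0])
      fix i assume i: "i \<in> Od d"
      then have "Poly_Mapping.lookup (pmono d g) (i, g0 i, g0 (Suc i)) = 1" using a by (auto simp: set_vsg)
      then show "g i = g0 i \<and> g (Suc i) = g0 (Suc i)" by (simp add: pmono_psum lookup_psum split: if_splits)
    qed
  next
    assume "g = g0"
    then show "\<forall>v\<in>set ?vs. Poly_Mapping.lookup (pmono d g) v = 1"
      by (auto simp: set_vsg pmono_psum lookup_psum Od_def)
  qed
  have "dvs ?vs (matprod n d 0 0 :: 'a mpoly) = (\<Sum>g\<in>G n d 0 0. dvs ?vs (Poly_Mapping.single (pmono d g) (1::'a)))"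
    by (simp add: matprod_expand dvs_sum)
  also have "\<dots> = (\<Sum>g\<in>G n d 0 0. if g = g0 then Poly_Mapping.single (pmono d g0 - ev ?vs) (1::'a) else 0)"
  proof (rule sum.cong[OF refl])
    fix g assume g: "g \<in> G n d 0 0"
    show "dvs ?vs (Poly_Mapping.single (pmono d g) (1::'a)) = (if g = g0 then Poly_Mapping.single (pmono d g0 - ev ?vs) (1::'a) else 0)"
      by (subst dvs_mono[OF distinct_vsg le1], subst cond[OF g]) simp
  qed
  also have "\<dots> = Poly_Mapping.single (pmono d g0 - ev ?vs) 1"
    using g0 finite_G by (simp add: sum.delta')
  also have "pmono d g0 - ev ?vs = psum (Ev d) g0"
    by (simp add: pmono_split ev_vsg)
  finally show ?thesis .
qed

lemma indep_monos:
  "mp.independent ((\<lambda>m. Poly_Mapping.single m (1::'a::field)) ` M)"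
proof -
  have "u v = 0" if t: "finite t" "t \<subseteq> (\<lambda>m. Poly_Mapping.single m (1::'a)) ` M"
    and s: "(\<Sum>w\<in>t. sc (u w) w) = 0" and v: "v \<in> t" for t u v
  proof -
    obtain m where m: "v = Poly_Mapping.single m 1" using v t by auto
    have "0 = Poly_Mapping.lookup (\<Sum>w\<in>t. sc (u w) w) m" using s by simp
    also have "\<dots> = (\<Sum>w\<in>t. if w = v then u w else 0)"
      unfolding lookup_sum
    proof (intro sum.cong refl)
      fix w assume "w \<in> t"
      then obtain m' where m': "w = Poly_Mapping.single m' 1" using t by auto
      have inj: "Poly_Mapping.single m' (1::'a) = Poly_Mapping.single m 1 \<Longrightarrow> m' = m"
        by (metis lookup_single_eq lookup_single_not_eq zero_neq_one)
      show "Poly_Mapping.lookup (sc (u w) w) m = (if w = v then u w else 0)"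
        using m m' inj by (auto simp: sc_def mult_single lookup_single when_def)
    qed
    also have "\<dots> = u v" using t v by (simp add: sum.delta')
    finally show ?thesis by simp
  qed
  then show ?thesis unfolding mp.dependent_explicit by blast
qed



lemma sum_list_in_span:
  "\<forall>x\<in>set xs. (x::'a::field mpoly) \<in> mp.span T \<Longrightarrow> sum_list xs \<in> mp.span T"
  by (induction xs) (auto intro: mp.span_add mp.span_zero)

lemma main_bound:
  fixes C :: "'a::field mpoly list list"
  assumes n: "n \<ge> 1" and d: "d \<ge> 1" and hC: "hom_SPS C" and ev: "SPS_eval C = matprod n d 0 0"
  shows "n ^ (d - 1) \<le> length C * 2 ^ d"
proof -
  let ?C1 = "filter (\<lambda>P. length P = d) C"
  let ?F = "matprod n d 0 0 :: 'a mpoly"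
  define T where "T = (\<Union>P\<in>set ?C1. subprods P)"
  have finT: "finite T" unfolding T_def by (simp add: finite_subprods)
  have lin: "\<forall>l\<in>set P. hom_linear l" if "P \<in> set ?C1" for P
    using hC that by (auto simp: hom_SPS_def)
  have cl: "dv v x \<in> mp.span T" if "x \<in> T" for v x
  proof -
    obtain P where P: "P \<in> set ?C1" "x \<in> subprods P" using \<open>x \<in> T\<close> unfolding T_def by blast
    have "dv v x \<in> mp.span (subprods P)" using dv_subprods[OF lin[OF P(1)] P(2)] .
    moreover have "mp.span (subprods P) \<subseteq> mp.span T" using P(1) unfolding T_def by (intro mp.span_mono) blast
    ultimately show ?thesis by blast
  qed
  have Fspan: "?F \<in> mp.span T"
  proof -
    have "?F = sum_list (map prod_list ?C1)" by (rule eval_split[OF hC ev])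
    moreover have "sum_list (map prod_list ?C1) \<in> mp.span T"
      by (rule sum_list_in_span) (auto simp: T_def intro!: mp.span_base prod_in_subprods)
    ultimately show ?thesis by simp
  qed
  define S where "S = (\<lambda>g. Poly_Mapping.single (psum (Ev d) g) (1::'a)) ` G n d 0 0"
  have Ssub: "S \<subseteq> mp.span T"
  proof
    fix x assume "x \<in> S"
    then obtain g where g: "g \<in> G n d 0 0" "x = Poly_Mapping.single (psum (Ev d) g) 1" unfolding S_def by auto
    have "x = dvs (vsg d g) ?F" using deriv_F[OF g(1), where 'a='a] g(2) by simp
    then show "x \<in> mp.span T" using dvs_span[OF cl Fspan] by simp
  qed
  have indS: "mp.independent S"
    unfolding S_def using indep_monos[of "psum (Ev d) ` G n d 0 0"] by (simp add: image_image)
  have "card S \<le> card T" using mp.independent_span_bound[OF finT indS Ssub] by simp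
  moreover have "card S = n ^ (d - 1)"
  proof -
    have "inj_on (\<lambda>g. Poly_Mapping.single (psum (Ev d) g) (1::'a)) (G n d 0 0)"
      using psum_Ev_inj unfolding inj_on_def
      by (metis lookup_single_eq lookup_single_not_eq zero_neq_one)
    then have "card S = card (G n d 0 0)" unfolding S_def by (rule card_image)
    also have "\<dots> = n ^ (d - 1)" using card_G[of 0 n "d - 1" 0] n d by simp
    finally show ?thesis .
  qed
  moreover have "card T \<le> length C * 2 ^ d"
  proof -
    have "card T \<le> (\<Sum>P\<in>set ?C1. card (subprods P))" unfolding T_def by (rule card_UN_le) simp
    also have "\<dots> \<le> (\<Sum>P\<in>set ?C1. 2 ^ d)"
    proof (rule sum_mono)
      fix P assume "P \<in> set ?C1"
      then have "length P = d" by simp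
      then show "card (subprods P) \<le> 2 ^ d" using card_subprods[of P] by simp
    qed
    also have "\<dots> = card (set ?C1) * 2 ^ d" by simp
    also have "\<dots> \<le> length C * 2 ^ d"
    proof -
      have "card (set ?C1) \<le> length ?C1" by (rule card_length)
      also have "\<dots> \<le> length C" by simp
      finally show ?thesis by simp
    qed
    finally show ?thesis .
  qed
  ultimately show ?thesis by linarith
qed

theorem theorem5:
  "\<exists>c::real. c > 0 \<and>
     (\<forall>(n::nat) (d::nat) (C::'a::field mpoly list list).
        n \<ge> 1 \<longrightarrow> d \<ge> 1 \<longrightarrow> hom_SPS C \<longrightarrow> SPS_eval C = matprod n d 0 0 \<longrightarrow>
        real (SPS_size C) \<ge> c * real n ^ (d - 1) / 2 ^ d)"
proof (intro exI[of _ 1] conjI allI impI)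
  fix n d :: nat and C :: "'a::field mpoly list list"
  assume a: "n \<ge> 1" "d \<ge> 1" "hom_SPS C" "SPS_eval C = matprod n d 0 0"
  have "n ^ (d - 1) \<le> length C * 2 ^ d" by (rule main_bound[OF a])
  also have "\<dots> \<le> SPS_size C * 2 ^ d"
    by (rule mult_le_mono1) (simp add: SPS_size_def)
  finally have "real (n ^ (d - 1)) \<le> real (SPS_size C * 2 ^ d)" by (simp only: of_nat_le_iff)
  then have le: "real n ^ (d - 1) \<le> real (SPS_size C) * 2 ^ d" by simp
  have pos: "(0::real) < 2 ^ d" by simp
  show "real (SPS_size C) \<ge> 1 * real n ^ (d - 1) / 2 ^ d"
    using le by (simp only: mult_1 pos_divide_le_eq[OF pos])
qed simp


end
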